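(* Let $X$ be a Polish space, $f:X\to\mathbb R$ a Baire-1 function and $a<b$ reals. Let $F\subseteq X$ be closed, $x\in X$ and $\xi<\omega_1$ with $x\in F^{(\xi)}_{f,a,b}$. Then there exists a countable compact set $K\subseteq F$ such that $x\in K^{(\xi)}_{f,a,b}$.
   Context: For closed $F\subseteq X$: $F'_{f,a,b}=\overline{F\cap[f<a]}\cap\overline{F\cap[f>b]}$, where $[f<a]=\{x:f(x)<a\}$, $[f>b]=\{x:f(x)>b\}$; iterated derivatives $F^{(0)}_{f,a,b}=F$, $F^{(\xi+1)}_{f,a,b}=(F^{(\xi)}_{f,a,b})'_{f,a,b}$, $F^{(\lambda)}_{f,a,b}=\bigcap_{\xi<\lambda}F^{(\xi)}_{f,a,b}$ for limit $\lambda$. *)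

theory Defs
  imports "HOL-Analysis.Analysis"
begin

definition baire1 :: "('a::topological_space \<Rightarrow> real) \<Rightarrow> bool" where
  "baire1 f \<longleftrightarrow> (\<exists>g :: nat \<Rightarrow> 'a \<Rightarrow> real.
      (\<forall>n. continuous_on UNIV (g n)) \<and> (\<forall>x. (\<lambda>n. g n x) \<longlonglongrightarrow> f x))"

definition fab_deriv :: "('a::topological_space \<Rightarrow> real) \<Rightarrow> real \<Rightarrow> real \<Rightarrow> 'a set \<Rightarrow> 'a set" where
  "fab_deriv f a b F = closure (F \<inter> {x. f x < a}) \<inter> closure (F \<inter> {x. f x > b})"

text \<open>Ordinals are represented as ranks of elements of a
  well-order r: the value at i is F^(rank i).\<close>
definition imm_pred :: "'i rel \<Rightarrow> 'i \<Rightarrow> 'i \<Rightarrow> bool" where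
  "imm_pred r j i \<longleftrightarrow> (j, i) \<in> r - Id \<and> (\<forall>k. (k, i) \<in> r - Id \<longrightarrow> (k, j) \<in> r)"

definition iter_fab_deriv ::
  "('a::topological_space \<Rightarrow> real) \<Rightarrow> real \<Rightarrow> real \<Rightarrow> 'i rel \<Rightarrow> 'a set \<Rightarrow> 'i \<Rightarrow> 'a set" where
  "iter_fab_deriv f a b r F = wfrec (r - Id) (\<lambda>D i.
     if \<not> (\<exists>j. (j, i) \<in> r - Id) then F
     else if (\<exists>j. imm_pred r j i) then fab_deriv f a b (D (THE j. imm_pred r j i))
     else \<Inter> {D j | j. (j, i) \<in> r - Id})"

end

theory Submission
  imports Defs
begin

lemma wo_wf: "Well_order r \<Longrightarrow> wf (r - Id)"
  by (simp add: well_order_on_def)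

lemma wo_antisym: "Well_order r \<Longrightarrow> antisym r"
  by (simp add: well_order_on_def linear_order_on_def partial_order_on_def)

lemma the_imm:
  assumes "Well_order r" "\<exists>j. imm_pred r j i"
  shows "imm_pred r (THE j. imm_pred r j i) i"
proof (rule theI')
  show "\<exists>!j. imm_pred r j i"
  proof -
    obtain j where j: "imm_pred r j i" using assms(2) by blast
    have "j' = j" if "imm_pred r j' i" for j'
    proof -
      have "(j', j) \<in> r" using j that unfolding imm_pred_def by blast
      moreover have "(j, j') \<in> r" using j that unfolding imm_pred_def by blast
      ultimately show ?thesis using wo_antisym[OF assms(1)] by (auto dest: antisymD)
    qed
    then show ?thesis using j by blast
  qed
qed

lemma iter_eq:
  assumes wo: "Well_order r"
  shows "iter_fab_deriv f a b r F i = (if \<not> (\<exists>j. (j, i) \<in> r - Id) then F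
     else if (\<exists>j. imm_pred r j i) then fab_deriv f a b (iter_fab_deriv f a b r F (THE j. imm_pred r j i))
     else \<Inter> {iter_fab_deriv f a b r F j | j. (j, i) \<in> r - Id})"
proof -
  have w: "wf (r - Id)" using wo_wf[OF wo] .
  show ?thesis
    unfolding iter_fab_deriv_def
    apply (subst wfrec[OF w])
    using the_imm[OF wo, of i]
    apply (auto simp: cut_def imm_pred_def)
    done
qed

lemma fab_deriv_mono: "A \<subseteq> B \<Longrightarrow> fab_deriv f a b A \<subseteq> fab_deriv f a b B"
  unfolding fab_deriv_def by (meson Int_mono closure_mono order_refl)

lemma iter_mono:
  assumes wo: "Well_order r" and GH: "G \<subseteq> H"
  shows "iter_fab_deriv f a b r G i \<subseteq> iter_fab_deriv f a b r H i"
  using wo_wf[OF wo]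
proof (induction i rule: wf_induct_rule)
  case (less i)
  show ?case
  proof (cases "\<exists>j. (j, i) \<in> r - Id")
    case False then show ?thesis using GH by (simp add: iter_eq[OF wo])
  next
    case True
    show ?thesis
    proof (cases "\<exists>j. imm_pred r j i")
      case True
      have "((THE j. imm_pred r j i), i) \<in> r - Id"
        using the_imm[OF wo True] unfolding imm_pred_def by blast
      then have "iter_fab_deriv f a b r G (THE j. imm_pred r j i) \<subseteq> iter_fab_deriv f a b r H (THE j. imm_pred r j i)"
        using less by blast
      then show ?thesis using True \<open>\<exists>j. (j, i) \<in> r - Id\<close>
        using fab_deriv_mono by (simp add: iter_eq[OF wo, of _ _ _ _ i])
    next
      case False
      then show ?thesis using \<open>\<exists>j. (j, i) \<in> r - Id\<close> less
        apply (simp add: iter_eq[OF wo, of _ _ _ _ i])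
        apply blast
        done
    qed
  qed
qed

lemma closure_loc:
  assumes "open U" "A \<inter> U = B \<inter> U"
  shows "closure (A \<inter> S) \<inter> U = closure (B \<inter> S) \<inter> U"
proof -
  have *: "closure (C \<inter> S) \<inter> U = closure (C \<inter> U \<inter> S) \<inter> U" for C
  proof
    show "closure (C \<inter> S) \<inter> U \<subseteq> closure (C \<inter> U \<inter> S) \<inter> U"
      using open_Int_closure_subset[OF assms(1), of "C \<inter> S"] by (auto simp: Int_ac)
    show "closure (C \<inter> U \<inter> S) \<inter> U \<subseteq> closure (C \<inter> S) \<inter> U"
      by (meson Int_mono closure_mono inf_le1 inf_mono order_refl)
  qed
  show ?thesis using *[of A] *[of B] assms(2) by simp
qed

lemma iter_loc:
  assumes wo: "Well_order r" and U: "open U"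
  shows "iter_fab_deriv f a b r (G \<inter> U) i \<inter> U = iter_fab_deriv f a b r G i \<inter> U"
  using wo_wf[OF wo]
proof (induction i rule: wf_induct_rule)
  case (less i)
  show ?case
  proof (cases "\<exists>j. (j, i) \<in> r - Id")
    case False then show ?thesis by (auto simp add: iter_eq[OF wo])
  next
    case True
    show ?thesis
    proof (cases "\<exists>j. imm_pred r j i")
      case True
      define J where "J = (THE j. imm_pred r j i)"
      have "(J, i) \<in> r - Id"
        using the_imm[OF wo True] unfolding imm_pred_def J_def by blast
      then have IH: "iter_fab_deriv f a b r (G \<inter> U) J \<inter> U = iter_fab_deriv f a b r G J \<inter> U"
        using less by blast
      have "fab_deriv f a b (iter_fab_deriv f a b r (G \<inter> U) J) \<inter> U = fab_deriv f a b (iter_fab_deriv f a b r G J) \<inter> U"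
        unfolding fab_deriv_def
        using closure_loc[OF U IH, of "{x. f x < a}"] closure_loc[OF U IH, of "{x. f x > b}"]
        by blast
      then show ?thesis using True \<open>\<exists>j. (j, i) \<in> r - Id\<close>
        by (simp add: iter_eq[OF wo, of _ _ _ _ i] J_def)
    next
      case False
      then show ?thesis using \<open>\<exists>j. (j, i) \<in> r - Id\<close> less
        apply (simp add: iter_eq[OF wo, of _ _ _ _ i])
        apply blast
        done
    qed
  qed
qed

lemma iter_sub:
  assumes wo: "Well_order r" and G: "closed G"
  shows "iter_fab_deriv f a b r G i \<subseteq> G"
  using wo_wf[OF wo]
proof (induction i rule: wf_induct_rule)
  case (less i)
  show ?case
  proof (cases "\<exists>j. (j, i) \<in> r - Id")
    case False then show ?thesis by (simp add: iter_eq[OF wo])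
  next
    case True
    show ?thesis
    proof (cases "\<exists>j. imm_pred r j i")
      case True
      define J where "J = (THE j. imm_pred r j i)"
      have "(J, i) \<in> r - Id"
        using the_imm[OF wo True] unfolding imm_pred_def J_def by blast
      then have IH: "iter_fab_deriv f a b r G J \<subseteq> G"
        using less by blast
      have "fab_deriv f a b (iter_fab_deriv f a b r G J) \<subseteq> G"
        unfolding fab_deriv_def using IH G
        by (metis closure_minimal inf.coboundedI1 inf.coboundedI2 order.trans)
      then show ?thesis using True \<open>\<exists>j. (j, i) \<in> r - Id\<close>
        by (simp add: iter_eq[OF wo, of _ _ _ _ i] J_def)
    next
      case False
      then show ?thesis using \<open>\<exists>j. (j, i) \<in> r - Id\<close> less
        apply (simp add: iter_eq[OF wo, of _ _ _ _ i])
        apply blast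
        done
    qed
  qed
qed

lemma compact_shrink:
  fixes x :: "'a::metric_space"
  assumes K: "\<And>j. j \<in> P \<Longrightarrow> compact (Kf j)"
    and fin: "\<And>e. e > 0 \<Longrightarrow> finite {j\<in>P. e \<le> rad j}"
  shows "compact (insert x (\<Union>j\<in>P. Kf j \<inter> cball x (rad j)))"
  unfolding compact_eq_Heine_Borel
proof (intro allI impI)
  fix C assume C: "(\<forall>c\<in>C. open c) \<and> insert x (\<Union>j\<in>P. Kf j \<inter> cball x (rad j)) \<subseteq> \<Union> C"
  then obtain U where U: "U \<in> C" "x \<in> U" by blast
  then have "open U" using C by blast
  then obtain e where e: "e > 0" "ball x e \<subseteq> U" using U(2) open_contains_ball by blast
  define Q where "Q = {j\<in>P. e \<le> rad j}"
  have "finite Q" using fin[OF e(1)] Q_def by simp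
  have "compact (\<Union>j\<in>Q. Kf j \<inter> cball x (rad j))"
    using \<open>finite Q\<close> K Q_def by (intro compact_UN) (auto intro: compact_Int_closed)
  moreover have "(\<Union>j\<in>Q. Kf j \<inter> cball x (rad j)) \<subseteq> \<Union>C" using C Q_def by blast
  ultimately obtain D where D: "D \<subseteq> C" "finite D" "(\<Union>j\<in>Q. Kf j \<inter> cball x (rad j)) \<subseteq> \<Union>D"
    using C by (meson compactE)
  show "\<exists>D\<subseteq>C. finite D \<and> insert x (\<Union>j\<in>P. Kf j \<inter> cball x (rad j)) \<subseteq> \<Union> D"
  proof (intro exI conjI)
    show "insert U D \<subseteq> C" using D U by blast
    show "finite (insert U D)" using D by simp
    show "insert x (\<Union>j\<in>P. Kf j \<inter> cball x (rad j)) \<subseteq> \<Union> (insert U D)"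
    proof
      fix y assume y: "y \<in> insert x (\<Union>j\<in>P. Kf j \<inter> cball x (rad j))"
      show "y \<in> \<Union> (insert U D)"
      proof (cases "y = x")
        case True then show ?thesis using U by blast
      next
        case False
        then obtain j where j: "j \<in> P" "y \<in> Kf j" "dist x y \<le> rad j" using y by auto
        show ?thesis
        proof (cases "j \<in> Q")
          case True
          then have "y \<in> (\<Union>j\<in>Q. Kf j \<inter> cball x (rad j))" using j by auto
          then show ?thesis using D by blast
        next
          case False
          then have "rad j < e" using j Q_def by auto
          then have "y \<in> U" using j e by auto
          then show ?thesis by blast
        qed
      qed
    qed
  qed
qed

lemma fin_rad:
  assumes ig: "inj_on g P" and e: "(e::real) > 0"
  shows "finite {j\<in>P. e \<le> 1 / (real (g j) + 1)}"
proof -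
  obtain N :: nat where N: "1 / e < N" using reals_Archimedean2 by blast
  let ?S = "{j\<in>P. e \<le> 1 / (real (g j) + 1)}"
  have "g ` ?S \<subseteq> {..N}"
  proof
    fix n assume "n \<in> g ` ?S"
    then have h: "e \<le> 1 / (real n + 1)" by auto
    have p: "0 < real n + 1" by simp
    from h have "e * (real n + 1) \<le> 1" by (simp only: pos_le_divide_eq[OF p])
    then have "(real n + 1) * e \<le> 1" by (simp only: mult.commute)
    then have "real n + 1 \<le> 1 / e" by (simp only: pos_le_divide_eq[OF e])
    then have "real n < real N" using N by linarith
    then show "n \<in> {..N}" by simp
  qed
  then have "finite (g ` ?S)" using finite_subset by blast
  moreover have "inj_on g ?S" using ig by (rule inj_on_subset) blast
  ultimately show ?thesis by (rule finite_imageD)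
qed

lemma point_in:
  assumes wo: "Well_order r" and y: "y \<in> iter_fab_deriv f a b r G j"
    and d: "dist x y < \<rho>" and sub: "G \<inter> cball x \<rho> \<subseteq> K"
  shows "y \<in> iter_fab_deriv f a b r K j"
proof -
  have "y \<in> iter_fab_deriv f a b r G j \<inter> ball x \<rho>" using y d by simp
  then have "y \<in> iter_fab_deriv f a b r (G \<inter> ball x \<rho>) j"
    using iter_loc[OF wo open_ball, of f a b G x \<rho> j] by blast
  moreover have "G \<inter> ball x \<rho> \<subseteq> K" using sub by auto
  ultimately show ?thesis using iter_mono[OF wo] by blast
qed


lemma rad_pos: "0 < 1 / (real n + 1)" by simp

lemma seq_pt:
  fixes x :: "'a::metric_space"
  assumes "x \<in> closure S"
  shows "\<exists>y. \<forall>n::nat. y n \<in> S \<and> dist x (y n) < 1 / (real n + 1)"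
proof -
  have "\<forall>n::nat. \<exists>z. z \<in> S \<and> dist x z < 1 / (real n + 1)"
    using assms closure_approachable by (metis dist_commute rad_pos)
  then show ?thesis by metis
qed

lemma lim_closure:
  fixes x :: "'a::metric_space"
  assumes "\<And>n::nat. y n \<in> S" "\<And>n. dist x (y n) < 1 / (real n + 1)"
  shows "x \<in> closure S"
proof (subst closure_approachable, intro allI impI)
  fix e :: real assume e: "e > 0"
  obtain n :: nat where n: "1 / e < n" using reals_Archimedean2 by blast
  have "1 / (real n + 1) < e" using n e by (simp add: field_simps)
  then show "\<exists>y\<in>S. dist y x < e" using assms by (metis dist_commute order.strict_trans)
qed

theorem lemma4p3:
  fixes f :: "'a::polish_space \<Rightarrow> real" and a b :: real
    and F :: "'a set" and x :: 'a
    and r :: "'i rel" and \<xi> :: 'i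
  assumes "baire1 f" and "a < b"
    and "closed F"
    and "Well_order r" and "countable (Field r)" and "\<xi> \<in> Field r"
    and "x \<in> iter_fab_deriv f a b r F \<xi>"
  shows "\<exists>K. countable K \<and> compact K \<and> K \<subseteq> F \<and> x \<in> iter_fab_deriv f a b r K \<xi>"
proof -
  note wo = assms(4)
  have main: "\<forall>x. x \<in> iter_fab_deriv f a b r F i \<longrightarrow>
     (\<exists>K. countable K \<and> compact K \<and> K \<subseteq> F \<and> x \<in> iter_fab_deriv f a b r K i)" for i
    using wo_wf[OF wo]
  proof (induction i rule: wf_induct_rule)
    case (less i)
    show ?case
    proof (intro allI impI)
      fix x assume x: "x \<in> iter_fab_deriv f a b r F i"
      have xF: "x \<in> F" using x iter_sub[OF wo assms(3)] by blast
      show "\<exists>K. countable K \<and> compact K \<and> K \<subseteq> F \<and> x \<in> iter_fab_deriv f a b r K i"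
      proof (cases "\<exists>j. (j, i) \<in> r - Id")
        case False
        then show ?thesis using xF by (intro exI[of _ "{x}"]) (simp add: iter_eq[OF wo])
      next
        case True
        note ex = True
        show ?thesis
        proof (cases "\<exists>j. imm_pred r j i")
          case True
          define J where "J = (THE j. imm_pred r j i)"
          have "(J, i) \<in> r - Id"
            using the_imm[OF wo True] unfolding imm_pred_def J_def by blast
          then have IH: "\<And>y. y \<in> iter_fab_deriv f a b r F J \<Longrightarrow>
             \<exists>K. countable K \<and> compact K \<and> K \<subseteq> F \<and> y \<in> iter_fab_deriv f a b r K J"
            using less by blast
          have eqK: "iter_fab_deriv f a b r K i = fab_deriv f a b (iter_fab_deriv f a b r K J)" for K
            using True ex by (simp add: iter_eq[OF wo, of _ _ _ _ i] J_def)
          have xd: "x \<in> fab_deriv f a b (iter_fab_deriv f a b r F J)" using x eqK by simp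
          obtain y where y: "\<And>n::nat. y n \<in> iter_fab_deriv f a b r F J \<inter> {x. f x < a}"
              "\<And>n. dist x (y n) < 1 / (real n + 1)"
            using seq_pt[of x] xd unfolding fab_deriv_def by blast
          obtain z where z: "\<And>n::nat. z n \<in> iter_fab_deriv f a b r F J \<inter> {x. f x > b}"
              "\<And>n. dist x (z n) < 1 / (real n + 1)"
            using seq_pt[of x] xd unfolding fab_deriv_def by blast
          have "\<forall>n. \<exists>K. countable K \<and> compact K \<and> K \<subseteq> F \<and> y n \<in> iter_fab_deriv f a b r K J"
            using IH y(1) by blast
          then obtain KA where KA: "\<And>n. countable (KA n) \<and> compact (KA n) \<and> KA n \<subseteq> F \<and> y n \<in> iter_fab_deriv f a b r (KA n) J"
            by metis
          have "\<forall>n. \<exists>K. countable K \<and> compact K \<and> K \<subseteq> F \<and> z n \<in> iter_fab_deriv f a b r K J"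
            using IH z(1) by blast
          then obtain KB where KB: "\<And>n. countable (KB n) \<and> compact (KB n) \<and> KB n \<subseteq> F \<and> z n \<in> iter_fab_deriv f a b r (KB n) J"
            by metis
          define rad where "rad = (\<lambda>n::nat. 1 / (real n + 1))"
          define KA' where "KA' = insert x (\<Union>n\<in>UNIV. KA n \<inter> cball x (rad n))"
          define KB' where "KB' = insert x (\<Union>n\<in>UNIV. KB n \<inter> cball x (rad n))"
          define K where "K = KA' \<union> KB'"
          have fin: "finite {j\<in>UNIV. e \<le> rad j}" if "e > 0" for e
            using fin_rad[of id UNIV e] that by (simp add: rad_def)
          have cK: "compact K" unfolding K_def KA'_def KB'_def
            using compact_shrink[of UNIV KA rad x] compact_shrink[of UNIV KB rad x] KA KB fin
            by blast
          have ctK: "countable K" unfolding K_def KA'_def KB'_def using KA KB by auto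
          have sK: "K \<subseteq> F" unfolding K_def KA'_def KB'_def using KA KB xF by auto
          have "y n \<in> iter_fab_deriv f a b r K J" for n
            by (rule point_in[OF wo _ y(2)]) (use KA in \<open>auto simp: K_def KA'_def rad_def\<close>)
          then have A: "x \<in> closure (iter_fab_deriv f a b r K J \<inter> {x. f x < a})"
            using y by (intro lim_closure[of y]) auto
          have "z n \<in> iter_fab_deriv f a b r K J" for n
            by (rule point_in[OF wo _ z(2)]) (use KB in \<open>auto simp: K_def KB'_def rad_def\<close>)
          then have B: "x \<in> closure (iter_fab_deriv f a b r K J \<inter> {x. f x > b})"
            using z by (intro lim_closure[of z]) auto
          show ?thesis using cK ctK sK A B eqK[of K]
            by (intro exI[of _ K]) (simp add: fab_deriv_def)
        next
          case False
          define P where "P = {j. (j, i) \<in> r - Id}"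
          have eqK: "iter_fab_deriv f a b r K i = \<Inter> {iter_fab_deriv f a b r K j | j. j \<in> P}" for K
            using False ex by (simp add: iter_eq[OF wo, of _ _ _ _ i] P_def)
          have "P \<subseteq> Field r" unfolding P_def Field_def by blast
          then have cP: "countable P" using assms(5) countable_subset by blast
          have "\<forall>j\<in>P. \<exists>K. countable K \<and> compact K \<and> K \<subseteq> F \<and> x \<in> iter_fab_deriv f a b r K j"
            using less x eqK[of F] P_def by blast
          then obtain Kf where Kf: "\<And>j. j \<in> P \<Longrightarrow> countable (Kf j) \<and> compact (Kf j) \<and> Kf j \<subseteq> F \<and> x \<in> iter_fab_deriv f a b r (Kf j) j"
            by metis
          define g where "g = to_nat_on P"
          have ig: "inj_on g P" using cP g_def by (simp add: inj_on_to_nat_on)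
          define rad where "rad = (\<lambda>j. 1 / (real (g j) + 1))"
          define K where "K = insert x (\<Union>j\<in>P. Kf j \<inter> cball x (rad j))"
          have cK: "compact K" unfolding K_def
            using compact_shrink[of P Kf rad x] Kf fin_rad[OF ig] rad_def by blast
          have ctK: "countable K" unfolding K_def using Kf cP by auto
          have sK: "K \<subseteq> F" unfolding K_def using Kf xF by auto
          have "x \<in> iter_fab_deriv f a b r K j" if "j \<in> P" for j
          proof (rule point_in[OF wo])
            show "x \<in> iter_fab_deriv f a b r (Kf j) j" using Kf that by blast
            show "dist x x < rad j" by (simp add: rad_def)
            show "Kf j \<inter> cball x (rad j) \<subseteq> K" using that by (auto simp: K_def)
          qed
          then show ?thesis using cK ctK sK eqK[of K]
            by (intro exI[of _ K]) auto
        qed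
      qed
    qed
  qed
  show ?thesis using main assms(7) by blast
qed

end
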